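(* Let $n\geq 3$, and let $G_1$ and $G_2$ be the $n$-vertex triangulations defined as follows. $G_1$ is obtained from a triangulation $H$ with $\lfloor n/3\rfloor+2$ vertices and maximum degree at most six by inserting, into each face of $H$ with exactly $r$ exceptions, a new vertex adjacent to the three vertices of that face, where $r=0,1,2$ according as $n\equiv 2,1,0\pmod 3$. $G_2$ is obtained from a path on $n-2$ vertices by adding two vertices $a,b$, joining each of them to every path vertex, and adding the edge $(a,b)$. Then any sequence of flips transforming $G_1$ into a triangulation isomorphic to $G_2$ has length at least $3n-6-2\lfloor n/3\rfloor-28\geq \frac{7n}{3}-34$.
   Context: A triangulation means a simple combinatorial triangulation: a maximal planar graph without self-loops or multiple edges, together with a fixed rotation system; all faces are triangles. Flipping an edge $(a,b)$: removing $(a,b)$ leaves a unique quadrilateral face bounded by a cycle $(a,a',b,b')$, and the flip replaces $(a,b)$ by $(a',b')$; only flips keeping the triangulation simple are allowed. *)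

theory Defs
  imports Complex_Main
begin

text \<open>A triangulation is represented by its vertex set V and its set F of
  triangular faces (each face a 3-element vertex set).  The rotation system of a
  simple triangulation determines exactly this face set (up to orientation),
  and conversely.\<close>

definition edges :: "'a set set \<Rightarrow> 'a set set" where
  "edges F = {e. card e = 2 \<and> (\<exists>f\<in>F. e \<subseteq> f)}"

definition nbrs :: "'a set set \<Rightarrow> 'a \<Rightarrow> 'a set" where
  "nbrs F v = {u. {u, v} \<in> edges F}"

text \<open>Simple combinatorial triangulation = simplicial triangulated 2-sphere:
  every edge lies in exactly two faces, every vertex link is a single cycle,
  the complex is connected and has Euler characteristic 2.\<close>

definition is_triangulation :: "'a set \<Rightarrow> 'a set set \<Rightarrow> bool" where
  "is_triangulation V F \<longleftrightarrow>
     finite V \<and>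
     (\<forall>f\<in>F. f \<subseteq> V \<and> card f = 3) \<and>
     (\<forall>v\<in>V. \<exists>f\<in>F. v \<in> f) \<and>
     (\<forall>e\<in>edges F. card {f\<in>F. e \<subseteq> f} = 2) \<and>
     (\<forall>v\<in>V. \<forall>x\<in>nbrs F v. \<forall>y\<in>nbrs F v. (\<lambda>p q. {v, p, q} \<in> F)\<^sup>*\<^sup>* x y) \<and>
     (\<forall>x\<in>V. \<forall>y\<in>V. (\<lambda>p q. {p, q} \<in> edges F)\<^sup>*\<^sup>* x y) \<and>
     int (card V) - int (card (edges F)) + int (card F) = 2"

text \<open>Flip of edge {a,b} with adjacent faces {a,b,c}, {a,b,d} into edge {c,d};
  only allowed if {c,d} is not already an edge (simplicity).\<close>

definition flip :: "'a set set \<Rightarrow> 'a set set \<Rightarrow> bool" where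
  "flip F F' \<longleftrightarrow> (\<exists>a b c d. {a, b, c} \<in> F \<and> {a, b, d} \<in> F \<and> c \<noteq> d \<and>
      {c, d} \<notin> edges F \<and>
      F' = (F - {{a, b, c}, {a, b, d}}) \<union> {{a, c, d}, {b, c, d}})"

definition exc :: "nat \<Rightarrow> nat" where
  "exc n = (if n mod 3 = 2 then 0 else if n mod 3 = 1 then 1 else 2)"

definition is_G1 :: "nat \<Rightarrow> 'a set \<Rightarrow> 'a set set \<Rightarrow> bool" where
  "is_G1 n V F \<longleftrightarrow> (\<exists>W FH S ins.
     is_triangulation W FH \<and> card W = n div 3 + 2 \<and>
     (\<forall>v\<in>W. card (nbrs FH v) \<le> 6) \<and>
     W \<subseteq> V \<and> S \<subseteq> FH \<and> card S = exc n \<and>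
     bij_betw ins (FH - S) (V - W) \<and>
     F = S \<union> (\<Union>f\<in>FH - S. {{x, y, ins f} | x y. x \<in> f \<and> y \<in> f \<and> x \<noteq> y}))"

definition G2_edges :: "'a \<Rightarrow> 'a \<Rightarrow> 'a list \<Rightarrow> 'a set set" where
  "G2_edges a b p = {{a, b}} \<union> {{a, x} | x. x \<in> set p} \<union> {{b, x} | x. x \<in> set p}
      \<union> {{p ! i, p ! Suc i} | i. Suc i < length p}"

definition is_G2 :: "'a set \<Rightarrow> 'a set set \<Rightarrow> bool" where
  "is_G2 V F \<longleftrightarrow> is_triangulation V F \<and>
     (\<exists>a b p. a \<noteq> b \<and> distinct p \<and> a \<notin> set p \<and> b \<notin> set p \<and>
        V = {a, b} \<union> set p \<and> edges F = G2_edges a b p)"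

end

theory Submission
  imports Defs
begin

lemma card2E: assumes "card e = 2" obtains u v where "e = {u,v}" "u \<noteq> v"
  using assms by (meson card_2_iff)

lemma flip_edges: assumes "flip F F'" shows "\<exists>e. edges F' \<subseteq> insert e (edges F)"
proof -
  from assms obtain a b c d where h: "{a, b, c} \<in> F" "{a, b, d} \<in> F"
    and F': "F' = (F - {{a, b, c}, {a, b, d}}) \<union> {{a, c, d}, {b, c, d}}"
    unfolding flip_def by blast
  have "edges F' \<subseteq> insert {c,d} (edges F)"
  proof
    fix e assume "e \<in> edges F'"
    then obtain g where g: "g \<in> F'" "e \<subseteq> g" and ce: "card e = 2" unfolding edges_def by blast
    obtain u v where uv: "e = {u,v}" "u \<noteq> v" using ce card2E by blast
    show "e \<in> insert {c,d} (edges F)"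
    proof (cases "g \<in> F")
      case True then show ?thesis using g ce unfolding edges_def by blast
    next
      case False
      then have "g = {a,c,d} \<or> g = {b,c,d}" using g F' by blast
      then have "e = {c,d} \<or> e \<subseteq> {a,b,c} \<or> e \<subseteq> {a,b,d}" using g uv by auto
      then show ?thesis using h ce unfolding edges_def by blast
    qed
  qed
  then show ?thesis by blast
qed

lemma flips_edges: "(flip ^^ k) F F' \<Longrightarrow> \<exists>E. finite E \<and> card E \<le> k \<and> edges F' \<subseteq> edges F \<union> E"
proof (induction k arbitrary: F')
  case 0 then show ?case by auto
next
  case (Suc k)
  then obtain F'' where a: "(flip ^^ k) F F''" "flip F'' F'" by auto
  from Suc.IH[OF a(1)] obtain E where E: "finite E" "card E \<le> k" "edges F'' \<subseteq> edges F \<union> E" by blast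
  from flip_edges[OF a(2)] obtain e where "edges F' \<subseteq> insert e (edges F'')" by blast
  then have "edges F' \<subseteq> edges F \<union> insert e E" using E by blast
  moreover have "card (insert e E) \<le> Suc k" using E by (simp add: card_insert_if)
  ultimately show ?case using E by blast
qed

lemma G2_card:
  assumes "is_G2 V T" "card V = n" "n \<ge> 3" "finite V"
  shows "finite (edges T) \<and> card (edges T) = 3 * n - 6"
proof -
  from assms obtain a b p where ab: "a \<noteq> b" "distinct p" "a \<notin> set p" "b \<notin> set p"
     "V = {a, b} \<union> set p" "edges T = G2_edges a b p" unfolding is_G2_def by blast
  have L: "length p + 2 = n" using ab assms(2) by (simp add: distinct_card)
  define A where "A = (\<lambda>x. {a,x}) ` set p"
  define B where "B = (\<lambda>x. {b,x}) ` set p"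
  define P where "P = (\<lambda>i. {p!i, p!Suc i}) ` {i. Suc i < length p}"
  have eq: "G2_edges a b p = {{a,b}} \<union> A \<union> B \<union> P"
    unfolding G2_edges_def A_def B_def P_def by blast
  have cA: "card A = length p" unfolding A_def
    by (subst card_image) (auto simp: inj_on_def doubleton_eq_iff ab distinct_card)
  have cB: "card B = length p" unfolding B_def
    by (subst card_image) (auto simp: inj_on_def doubleton_eq_iff ab distinct_card)
  have inj: "inj_on (\<lambda>i. {p!i, p!Suc i}) {i. Suc i < length p}"
  proof (rule inj_onI)
    fix i j assume i: "i \<in> {i. Suc i < length p}" and j: "j \<in> {i. Suc i < length p}"
      and e: "{p!i, p!Suc i} = {p!j, p!Suc j}"
    then have "(p!i = p!j \<and> p!Suc i = p!Suc j) \<or> (p!i = p!Suc j \<and> p!Suc i = p!j)"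
      by (auto simp: doubleton_eq_iff)
    then show "i = j" using i j ab(2) by (auto simp: nth_eq_iff_index_eq)
  qed
  have "{i. Suc i < length p} = {..<length p - 1}" by auto
  then have cP: "card P = length p - 1" unfolding P_def using inj by (simp add: card_image)
  have setp: "\<And>x. x \<in> set p \<Longrightarrow> x \<noteq> a \<and> x \<noteq> b" using ab by auto
  have pin: "\<And>i. i < length p \<Longrightarrow> p!i \<in> set p" by simp
  have d1: "{{a,b}} \<inter> (A \<union> B \<union> P) = {}" unfolding A_def B_def P_def
    using setp ab by (auto simp: doubleton_eq_iff)
  have d2: "A \<inter> (B \<union> P) = {}" unfolding A_def B_def P_def
    using setp ab by (auto simp: doubleton_eq_iff)
  have d3: "B \<inter> P = {}" unfolding B_def P_def
    using setp ab by (auto simp: doubleton_eq_iff)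
  have fin: "finite A" "finite B" "finite P" unfolding A_def B_def P_def
    using \<open>{i. Suc i < length p} = {..<length p - 1}\<close> by auto
  have "card ({{a,b}} \<union> A \<union> B \<union> P) = 1 + card A + card B + card P"
    using d1 d2 d3 fin
    by (simp add: card_Un_disjoint Un_assoc Int_Un_distrib Int_Un_distrib2)
  then show ?thesis using eq ab(6) cA cB cP L fin assms(3) by auto
qed
lemma faces_at:
  assumes T: "is_triangulation W FH" and w: "w \<in> W"
  shows "finite {f\<in>FH. w\<in>f} \<and> finite (nbrs FH w) \<and> card {f\<in>FH. w\<in>f} = card (nbrs FH w)"
proof -
  have fW: "finite W" and fc: "\<forall>f\<in>FH. f \<subseteq> W \<and> card f = 3"
    and ec: "\<forall>e\<in>edges FH. card {f\<in>FH. e \<subseteq> f} = 2"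
    using T unfolding is_triangulation_def by auto
  have fFH: "finite FH" using fc fW by (meson PowI finite_Pow_iff rev_finite_subset subsetI)
  define Fw where "Fw = {f\<in>FH. w\<in>f}"
  define N where "N = nbrs FH w"
  have fFw: "finite Fw" using fFH unfolding Fw_def by auto
  have NW: "N \<subseteq> W" unfolding N_def nbrs_def edges_def using fc by blast
  have fN: "finite N" using NW fW finite_subset by blast
  define P where "P = Sigma Fw (\<lambda>f. f - {w})"
  define Q where "Q = Sigma N (\<lambda>u. {f\<in>FH. {u,w} \<subseteq> f})"
  have "card P = (\<Sum>f\<in>Fw. card (f - {w}))" unfolding P_def
    using fFw fc fW by (intro card_SigmaI) (auto simp: Fw_def intro: finite_subset)
  also have "\<dots> = (\<Sum>f\<in>Fw. 2)" using fc by (intro sum.cong) (auto simp: Fw_def)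
  finally have cP: "card P = 2 * card Fw" by simp
  have "card Q = (\<Sum>u\<in>N. card {f\<in>FH. {u,w} \<subseteq> f})" unfolding Q_def
    using fN fFH by (intro card_SigmaI) auto
  also have "\<dots> = (\<Sum>u\<in>N. 2)" using ec by (intro sum.cong) (auto simp: N_def nbrs_def)
  finally have cQ: "card Q = 2 * card N" by simp
  have "(\<lambda>(f,u). (u,f)) ` P = Q"
  proof (rule set_eqI)
    fix z show "z \<in> (\<lambda>(f,u). (u,f)) ` P \<longleftrightarrow> z \<in> Q"
    proof (cases z)
      case (Pair u f)
      have "(f, u) \<in> P \<longleftrightarrow> (u, f) \<in> Q"
      proof
        assume "(f,u) \<in> P"
        then have "f \<in> FH" "w \<in> f" "u \<in> f" "u \<noteq> w" unfolding P_def Fw_def by auto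
        then have "{u,w} \<in> edges FH" unfolding edges_def by auto
        then show "(u,f) \<in> Q" unfolding Q_def N_def nbrs_def using \<open>f \<in> FH\<close> \<open>w \<in> f\<close> \<open>u \<in> f\<close> by auto
      next
        assume "(u,f) \<in> Q"
        then have "{u,w} \<in> edges FH" "f \<in> FH" "{u,w} \<subseteq> f" unfolding Q_def N_def nbrs_def by auto
        then have "u \<noteq> w" unfolding edges_def by (cases "u = w") auto
        then show "(f,u) \<in> P" unfolding P_def Fw_def using \<open>f \<in> FH\<close> \<open>{u,w} \<subseteq> f\<close> by auto
      qed
      then show ?thesis using Pair by (auto intro!: bexI[of _ "(f,u)"])
    qed
  qed
  moreover have "inj_on (\<lambda>(f,u). (u,f)) P" by (auto simp: inj_on_def)
  ultimately have "card P = card Q" by (metis card_image)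
  then show ?thesis using cP cQ fFw fN unfolding Fw_def N_def by simp
qed

lemma G1_edge_cases:
  assumes T: "is_triangulation W FH" and S: "S \<subseteq> FH"
    and G: "G1 = S \<union> (\<Union>f\<in>FH - S. {{x, y, ins f} | x y. x \<in> f \<and> y \<in> f \<and> x \<noteq> y})"
    and e: "e \<in> edges G1"
  shows "card e = 2 \<and> ((e \<subseteq> W \<and> e \<in> edges FH) \<or> (\<exists>f\<in>FH-S. \<exists>x\<in>f. e = {x, ins f}))"
proof -
  have fc: "\<forall>f\<in>FH. f \<subseteq> W \<and> card f = 3" using T unfolding is_triangulation_def by auto
  from e obtain g where g: "g \<in> G1" "e \<subseteq> g" and ce: "card e = 2" unfolding edges_def by blast
  obtain u v where uv: "e = {u,v}" "u \<noteq> v" using ce card2E by blast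
  show ?thesis
  proof (cases "g \<in> S")
    case True
    then have "e \<in> edges FH" using S g ce unfolding edges_def by blast
    then show ?thesis using True S fc g ce by blast
  next
    case False
    then obtain f x y where f: "f \<in> FH - S" "x \<in> f" "y \<in> f" "g = {x,y,ins f}" using G g by blast
    have "e = {x,y} \<or> e = {x, ins f} \<or> e = {y, ins f}" using uv g f(4) by auto
    moreover have "{x,y} \<subseteq> W" using f fc by blast
    moreover have "e = {x,y} \<Longrightarrow> e \<in> edges FH" using f ce unfolding edges_def by blast
    ultimately show ?thesis using f ce by blast
  qed
qed

lemma G1_deg:
  assumes T: "is_triangulation W FH" and S: "S \<subseteq> FH"
    and G: "G1 = S \<union> (\<Union>f\<in>FH - S. {{x, y, ins f} | x y. x \<in> f \<and> y \<in> f \<and> x \<noteq> y})"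
    and bij: "bij_betw ins (FH - S) (V - W)"
    and deg: "\<forall>v\<in>W. card (nbrs FH v) \<le> 6"
  shows "finite {e\<in>edges G1. v \<in> e} \<and> card {e\<in>edges G1. v \<in> e} \<le> 12"
proof -
  have fc: "\<forall>f\<in>FH. f \<subseteq> W \<and> card f = 3" and fW: "finite W" using T unfolding is_triangulation_def by auto
  have insW: "\<And>f. f \<in> FH - S \<Longrightarrow> ins f \<notin> W" using bij unfolding bij_betw_def by auto
  note cases = G1_edge_cases[OF T S G]
  show ?thesis
  proof (cases "v \<in> W")
    case True
    define X where "X = nbrs FH v \<union> ins ` {f\<in>FH. v\<in>f}"
    have sub: "{e\<in>edges G1. v \<in> e} \<subseteq> (\<lambda>u. {u,v}) ` X"
    proof
      fix e assume "e \<in> {e\<in>edges G1. v \<in> e}"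
      then have e: "e \<in> edges G1" "v \<in> e" by auto
      obtain u w where uw: "e = {u,w}" "u \<noteq> w" using cases[OF e(1)] card2E by blast
      have "(e \<subseteq> W \<and> e \<in> edges FH) \<or> (\<exists>f\<in>FH-S. \<exists>x\<in>f. e = {x, ins f})" using cases[OF e(1)] by blast
      then show "e \<in> (\<lambda>u. {u,v}) ` X"
      proof
        assume c1: "e \<subseteq> W \<and> e \<in> edges FH"
        obtain z where z: "e = {z, v}" using e(2) uw by (metis insert_commute insertE singletonD)
        then have "z \<in> nbrs FH v" using c1 unfolding nbrs_def by simp
        then show ?thesis using z unfolding X_def by blast
      next
        assume "\<exists>f\<in>FH - S. \<exists>x\<in>f. e = {x, ins f}"
        then obtain f x where fx: "f \<in> FH - S" "x \<in> f" "e = {x, ins f}" by blast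
        have "v \<noteq> ins f" using insW[OF fx(1)] True by auto
        then have "v = x" using fx e(2) by auto
        then have "e = {ins f, v}" "ins f \<in> X" using fx unfolding X_def by auto
        then show ?thesis by blast
      qed
    qed
    have fFH: "finite FH" using fc fW by (meson PowI finite_Pow_iff rev_finite_subset subsetI)
    have fa: "finite {f\<in>FH. v\<in>f}" "finite (nbrs FH v)" "card {f\<in>FH. v\<in>f} = card (nbrs FH v)"
      using faces_at[OF T True] by auto
    have fX: "finite X" unfolding X_def using fa by auto
    have "card X \<le> card (nbrs FH v) + card (ins ` {f\<in>FH. v\<in>f})" unfolding X_def by (rule card_Un_le)
    also have "\<dots> \<le> card (nbrs FH v) + card {f\<in>FH. v\<in>f}" using card_image_le[OF fa(1)] by simp
    also have "\<dots> \<le> 12" using fa deg True by (metis add_le_mono numeral_Bit0)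
    finally have "card X \<le> 12" .
    moreover have "card ((\<lambda>u. {u,v}) ` X) \<le> card X" using fX by (rule card_image_le)
    moreover have "finite ((\<lambda>u. {u,v}) ` X)" using fX by simp
    ultimately show ?thesis using sub by (meson card_mono dual_order.trans finite_subset)
  next
    case False
    define Y where "Y = \<Union>{f\<in>FH-S. ins f = v}"
    have sub: "{e\<in>edges G1. v \<in> e} \<subseteq> (\<lambda>u. {u,v}) ` Y"
    proof
      fix e assume "e \<in> {e\<in>edges G1. v \<in> e}"
      then have e: "e \<in> edges G1" "v \<in> e" by auto
      from cases[OF e(1)] False e(2) obtain f x where fx: "f \<in> FH - S" "x \<in> f" "e = {x, ins f}" by blast
      have "x \<in> W" using fx fc by blast
      then have "v = ins f" using False fx e(2) by auto
      then show "e \<in> (\<lambda>u. {u,v}) ` Y" unfolding Y_def using fx by blast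
    qed
    have "finite Y \<and> card Y \<le> 3"
    proof (cases "\<exists>f0\<in>FH-S. ins f0 = v")
      case True
      then obtain f0 where f0: "f0 \<in> FH-S" "ins f0 = v" by blast
      have "{f\<in>FH-S. ins f = v} = {f0}" using f0 bij unfolding bij_betw_def inj_on_def by blast
      then have "Y = f0" unfolding Y_def by simp
      moreover have "card f0 = 3" using fc f0 by blast
      ultimately show ?thesis by (metis card.infinite zero_neq_numeral order_refl)
    next
      case False
      then have "{f\<in>FH-S. ins f = v} = {}" by blast
      then have "Y = {}" unfolding Y_def by (metis Union_empty)
      then show ?thesis by simp
    qed
    then have fY: "finite Y" "card Y \<le> 3" by auto
    have "card {e\<in>edges G1. v \<in> e} \<le> card ((\<lambda>u. {u,v}) ` Y)" using sub fY by (simp add: card_mono)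
    also have "\<dots> \<le> card Y" using fY by (simp add: card_image_le)
    finally have "card {e\<in>edges G1. v \<in> e} \<le> 3" using fY(2) by linarith
    moreover have "finite {e\<in>edges G1. v \<in> e}" using sub fY(1) by (meson finite_imageI finite_subset)
    ultimately show ?thesis by simp
  qed
qed

lemma path_bound:
  assumes "distinct p" "finite W" "\<forall>e\<in>E. e \<inter> W \<noteq> {}"
  shows "finite {e\<in>{{p!i, p!Suc i}|i. Suc i < length p}. e \<in> E} \<and>
         card {e\<in>{{p!i, p!Suc i}|i. Suc i < length p}. e \<in> E} \<le> 2 * card W"
proof -
  define I where "I = {i. Suc i < length p \<and> {p!i, p!Suc i} \<in> E}"
  define J where "J = {i. i < length p \<and> p!i \<in> W}"
  have sub: "{e\<in>{{p!i, p!Suc i}|i. Suc i < length p}. e \<in> E} \<subseteq> (\<lambda>i. {p!i, p!Suc i}) ` I"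
    unfolding I_def by blast
  have fI: "finite I" unfolding I_def by (rule finite_subset[of _ "{..<length p}"]) auto
  have IJ: "I \<subseteq> J \<union> {i. Suc i \<in> J}" unfolding I_def J_def using assms(3) by auto
  have cJ: "card J \<le> card W"
  proof -
    have "inj_on (\<lambda>i. p!i) J" using assms(1) unfolding J_def inj_on_def by (simp add: nth_eq_iff_index_eq)
    moreover have "(\<lambda>i. p!i) ` J \<subseteq> W" unfolding J_def by auto
    ultimately show ?thesis using assms(2) by (meson card_inj_on_le)
  qed
  have fJ: "finite J" unfolding J_def by auto
  have cJ2: "card {i. Suc i \<in> J} \<le> card J"
  proof -
    have "inj_on Suc {i. Suc i \<in> J}" by auto
    moreover have "Suc ` {i. Suc i \<in> J} \<subseteq> J" by auto
    ultimately show ?thesis using fJ by (meson card_inj_on_le)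
  qed
  have fJ2: "finite {i. Suc i \<in> J}" by (rule finite_subset[of _ "{..<length p}"]) (auto simp: J_def)
  have "card I \<le> card (J \<union> {i. Suc i \<in> J})" using IJ fJ fJ2 by (simp add: card_mono)
  also have "\<dots> \<le> card J + card {i. Suc i \<in> J}" by (rule card_Un_le)
  finally have "card I \<le> 2 * card W" using cJ cJ2 by simp
  moreover have "card ((\<lambda>i. {p!i, p!Suc i}) ` I) \<le> card I" using fI by (rule card_image_le)
  ultimately show ?thesis using sub fI
    by (meson card_mono finite_imageI finite_subset le_trans)
qed

theorem mainTheorem5:
  fixes n k :: nat and V :: "'a set" and G1 T :: "'a set set"
  assumes "n \<ge> 3" and "finite V" and "card V = n"
    and "is_G1 n V G1"
    and "(flip ^^ k) G1 T"
    and "is_G2 V T"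
  shows "int k \<ge> 3 * int n - 6 - 2 * int (n div 3) - 28 \<and>
         real_of_int (3 * int n - 6 - 2 * int (n div 3) - 28) \<ge> 7 * real n / 3 - 34"
proof
  from assms(4) obtain W FH S ins where
    T: "is_triangulation W FH" and cW: "card W = n div 3 + 2" and
    deg: "\<forall>v\<in>W. card (nbrs FH v) \<le> 6" and "W \<subseteq> V" and S: "S \<subseteq> FH" and
    bij: "bij_betw ins (FH - S) (V - W)" and
    G: "G1 = S \<union> (\<Union>f\<in>FH - S. {{x, y, ins f} | x y. x \<in> f \<and> y \<in> f \<and> x \<noteq> y})"
    unfolding is_G1_def by blast
  have fc: "\<forall>f\<in>FH. f \<subseteq> W \<and> card f = 3" and fW: "finite W" using T unfolding is_triangulation_def by auto
  from assms(6) obtain a b p where ab: "distinct p" "edges T = G2_edges a b p" unfolding is_G2_def by blast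
  from G2_card[OF assms(6) assms(3) assms(1) assms(2)] have fT: "finite (edges T)" and cT: "card (edges T) = 3 * n - 6" by auto
  from flips_edges[OF assms(5)] obtain E where E: "finite E" "card E \<le> k" "edges T \<subseteq> edges G1 \<union> E" by blast
  have meet: "\<forall>e\<in>edges G1. e \<inter> W \<noteq> {}"
  proof
    fix e assume e: "e \<in> edges G1"
    have "card e = 2 \<and> ((e \<subseteq> W \<and> e \<in> edges FH) \<or> (\<exists>f\<in>FH-S. \<exists>x\<in>f. e = {x, ins f}))"
      by (rule G1_edge_cases[OF T S G e])
    then have c2: "card e = 2" and "(e \<subseteq> W) \<or> (\<exists>f\<in>FH-S. \<exists>x\<in>f. e = {x, ins f})" by auto
    from this(2) show "e \<inter> W \<noteq> {}"
    proof
      assume "e \<subseteq> W" moreover have "e \<noteq> {}" using c2 by auto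
      ultimately show ?thesis by blast
    next
      assume "\<exists>f\<in>FH-S. \<exists>x\<in>f. e = {x, ins f}"
      then obtain f x where "f \<in> FH" "x \<in> f" "e = {x, ins f}" by blast
      then have "x \<in> e \<inter> W" using fc by blast
      then show ?thesis by blast
    qed
  qed
  define Ea where "Ea = {e\<in>edges G1. a \<in> e}"
  define Eb where "Eb = {e\<in>edges G1. b \<in> e}"
  define Pp where "Pp = {e\<in>{{p!i, p!Suc i}|i. Suc i < length p}. e \<in> edges G1}"
  have a: "finite Ea" "card Ea \<le> 12" unfolding Ea_def using G1_deg[OF T S G bij deg] by auto
  have b: "finite Eb" "card Eb \<le> 12" unfolding Eb_def using G1_deg[OF T S G bij deg] by auto
  have pp: "finite Pp" "card Pp \<le> 2 * card W" unfolding Pp_def using path_bound[OF ab(1) fW meet] by auto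
  have sub: "edges T \<inter> edges G1 \<subseteq> Ea \<union> Eb \<union> Pp"
    unfolding Ea_def Eb_def Pp_def using ab(2) unfolding G2_edges_def by blast
  have "card (edges T \<inter> edges G1) \<le> card (Ea \<union> Eb \<union> Pp)"
    using sub a b pp by (simp add: card_mono)
  also have "\<dots> \<le> card Ea + card Eb + card Pp" by (meson card_Un_le add_le_mono le_trans order_refl)
  finally have c1: "card (edges T \<inter> edges G1) \<le> 28 + 2 * (n div 3)" using a b pp cW by linarith
  have "edges T - edges G1 \<subseteq> E" using E by blast
  then have c2: "card (edges T - edges G1) \<le> k" using E by (meson card_mono le_trans)
  have "edges T = (edges T \<inter> edges G1) \<union> (edges T - edges G1)" by blast
  then have "card (edges T) \<le> card (edges T \<inter> edges G1) + card (edges T - edges G1)"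
    by (metis card_Un_le)
  then have "3 * n - 6 \<le> 28 + 2 * (n div 3) + k" using c1 c2 cT by linarith
  then show "int k \<ge> 3 * int n - 6 - 2 * int (n div 3) - 28" using assms(1) by linarith
next
  have "3 * (n div 3) \<le> n" by simp
  then have "3 * real (n div 3) \<le> real n" by (metis of_nat_le_iff of_nat_mult of_nat_numeral)
  then have "real (n div 3) \<le> real n / 3" by simp
  then show "real_of_int (3 * int n - 6 - 2 * int (n div 3) - 28) \<ge> 7 * real n / 3 - 34" by simp
qed

end
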